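(* Let $l\mathcal D^{cst}(\binom{n_1}{m_1},\binom{n_2}{m_2})\subseteq l\mathcal D(\binom{n_1}{m_1},\binom{n_2}{m_2})$ be the subcomplex spanned by looped diagrams having at least one constant loop, and $i$ its inclusion. Each $p_j$ is a chain map, and the chain map \[p_{cst}=\sum_{k=1}^{n_1}\ \sum_{T\subseteq\{1,\dots,n_1\},\,|T|=k}(-1)^{k+1}p_T\colon l\mathcal D(\tbinom{n_1}{m_1},\tbinom{n_2}{m_2})\to l\mathcal D^{cst}(\tbinom{n_1}{m_1},\tbinom{n_2}{m_2})\] satisfies $p_{cst}\circ i=\mathrm{id}$. Consequently $l\mathcal D(\binom{n_1}{m_1},\binom{n_2}{m_2})\cong l\mathcal D^{cst}(\binom{n_1}{m_1},\binom{n_2}{m_2})\oplus l\mathcal D^{>0}(\binom{n_1}{m_1},\binom{n_2}{m_2})$ as chain complexes.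
   Context: $l\mathcal D(\binom{n_1}{m_1},\binom{n_2}{m_2})$ is the chain complex of looped diagrams $(\Gamma,\gamma_1,\dots,\gamma_{n_1})$: $\Gamma$ is a commutative Sullivan diagram (fat graph with $n_2$ ordered white vertices each with a start half-edge, trivalent black vertices, $n_1+m_1+m_2$ labelled leaves, modulo forgetting cyclic orders at black vertices and slide moves) and $\gamma_j$ is a loop based at the arc component (component after deleting white vertices) of leaf $j$, i.e. a sequence of oriented boundary segments of white vertices (arcs between consecutive half-edges) starting and ending at that arc component, consecutive segments meeting at a common arc component, no segment immediately followed by its reverse; the empty sequence is the constant loop. The differential is the signed sum of contractions of single boundary segments (merging the two bounding half-edges at a new black vertex and deleting the segment from the loops). For $1\le j\le n_1$, $p_j(\Gamma,\gamma_1,\dots,\gamma_{n_1})=(\Gamma,\gamma_1,\dots,\gamma_{j-1},cst,\gamma_{j+1},\dots,\gamma_{n_1})$ with $cst$ the constant loop at leaf $j$; for $T=\{t_1,\dots,t_k\}$, $p_T=p_{t_k}\circ\cdots\circ p_{t_1}$ ($p_\emptyset=\mathrm{id}$). $l\mathcal D^{>0}$ is the subcomplex spanned by the elements $(\Gamma,\langle\gamma_1\rangle,\dots,\langle\gamma_{n_1}\rangle):=x-p_{cst}(x)=\sum_{T\subseteq\{1..n_1\}}(-1)^{|T|}p_T(x)$ for looped diagrams $x=(\Gamma,\gamma_1,\dots,\gamma_{n_1})$. *)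

theory Defs
  imports Main "HOL-Library.Poly_Mapping"
begin

text \<open>Points of a diagram: half-edge number i (counted from the start half-edge,
  in the cyclic order) at white vertex v, or the leaf labelled l.\<close>
datatype pt = HE nat nat | Leaf nat

text \<open>An oriented boundary segment (v, i, fw): the boundary segment of white vertex v
  between half-edges i and (i+1) mod k_v; fw = True means traversed from half-edge i
  to half-edge (i+1) mod k_v, fw = False the reverse.\<close>
type_synonym seg = "nat \<times> nat \<times> bool"

text \<open>A looped diagram: number of half-edges at each white vertex, the partition of
  all half-edges and leaves into arc components, and the loops gamma_1 .. gamma_{n1}
  (entry j-1 of the list is gamma_j).\<close>
datatype ldiag = LDiag (wv: "nat list") (comps: "pt set set") (loops: "seg list list")

definition points :: "nat \<Rightarrow> nat \<Rightarrow> nat \<Rightarrow> nat list \<Rightarrow> pt set" where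
  "points n1 m1 m2 ks = {HE v i |v i. v < length ks \<and> i < ks ! v} \<union> {Leaf l |l. 1 \<le> l \<and> l \<le> n1 + m1 + m2}"

definition samecomp :: "pt set set \<Rightarrow> pt \<Rightarrow> pt \<Rightarrow> bool" where
  "samecomp C p q \<longleftrightarrow> (\<exists>B\<in>C. p \<in> B \<and> q \<in> B)"

definition wconn :: "pt set set \<Rightarrow> (nat \<times> nat) set" where
  "wconn C = {(v, w). \<exists>B\<in>C. \<exists>a b. HE v a \<in> B \<and> HE w b \<in> B}"

text \<open>Each arc component is a black tree (trivalent inner vertices) whose boundary points are
  the half-edges and leaves in it; modulo slide moves and forgetting cyclic orders at black
  vertices such a tree is determined by this set, which must have at least 2 elements and
  contain a half-edge; the whole graph is connected.\<close>
definition valid_diag :: "nat \<Rightarrow> nat \<Rightarrow> nat \<Rightarrow> nat \<Rightarrow> nat list \<Rightarrow> pt set set \<Rightarrow> bool" where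
  "valid_diag n1 m1 n2 m2 ks C \<longleftrightarrow>
     length ks = n2 \<and> (\<forall>v<n2. 1 \<le> ks ! v) \<and>
     \<Union>C = points n1 m1 m2 ks \<and>
     (\<forall>B\<in>C. \<forall>B'\<in>C. B \<noteq> B' \<longrightarrow> B \<inter> B' = {}) \<and>
     (\<forall>B\<in>C. 2 \<le> card B \<and> (\<exists>v i. HE v i \<in> B)) \<and>
     (\<forall>v<n2. \<forall>w<n2. (v, w) \<in> (wconn C)\<^sup>*)"

definition seg_src :: "nat list \<Rightarrow> seg \<Rightarrow> pt" where
  "seg_src ks s = (case s of (v, i, fw) \<Rightarrow> if fw then HE v i else HE v (Suc i mod (ks ! v)))"

definition seg_tgt :: "nat list \<Rightarrow> seg \<Rightarrow> pt" where
  "seg_tgt ks s = (case s of (v, i, fw) \<Rightarrow> if fw then HE v (Suc i mod (ks ! v)) else HE v i)"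

definition seg_inv :: "seg \<Rightarrow> seg" where
  "seg_inv s = (case s of (v, i, fw) \<Rightarrow> (v, i, \<not> fw))"

definition valid_loop :: "nat list \<Rightarrow> pt set set \<Rightarrow> nat \<Rightarrow> seg list \<Rightarrow> bool" where
  "valid_loop ks C j g \<longleftrightarrow>
     (\<forall>s\<in>set g. case s of (v, i, fw) \<Rightarrow> v < length ks \<and> i < ks ! v) \<and>
     (g \<noteq> [] \<longrightarrow> samecomp C (Leaf j) (seg_src ks (hd g)) \<and> samecomp C (seg_tgt ks (last g)) (Leaf j)) \<and>
     (\<forall>k. Suc k < length g \<longrightarrow> samecomp C (seg_tgt ks (g ! k)) (seg_src ks (g ! Suc k))) \<and>
     (\<forall>k. Suc k < length g \<longrightarrow> g ! Suc k \<noteq> seg_inv (g ! k))"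

definition valid_ld :: "nat \<Rightarrow> nat \<Rightarrow> nat \<Rightarrow> nat \<Rightarrow> ldiag set" where
  "valid_ld n1 m1 n2 m2 = {x. valid_diag n1 m1 n2 m2 (wv x) (comps x) \<and> length (loops x) = n1 \<and>
      (\<forall>j\<in>{1..n1}. valid_loop (wv x) (comps x) j (loops x ! (j - 1)))}"

definition deg :: "ldiag \<Rightarrow> nat" where
  "deg x = (\<Sum>v<length (wv x). wv x ! v - 1)"

text \<open>Renaming of half-edge indices at white vertex v (with k half-edges) when segment i
  is contracted (half-edges i and (i+1) mod k are merged).\<close>
definition new_idx :: "nat \<Rightarrow> nat \<Rightarrow> nat \<Rightarrow> nat" where
  "new_idx k i m = (if Suc i = k \<and> Suc m = k then 0 else if m \<le> i then m else m - 1)"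

definition ren_pt :: "nat \<Rightarrow> nat \<Rightarrow> nat \<Rightarrow> pt \<Rightarrow> pt" where
  "ren_pt k v i p = (case p of HE w m \<Rightarrow> if w = v then HE v (new_idx k i m) else HE w m | Leaf l \<Rightarrow> Leaf l)"

definition contract_comps :: "nat list \<Rightarrow> pt set set \<Rightarrow> nat \<Rightarrow> nat \<Rightarrow> pt set set" where
  "contract_comps ks C v i =
     (let k = ks ! v; a = HE v i; b = HE v (Suc i mod k);
          merged = {B\<in>C. a \<in> B \<or> b \<in> B} in
      (\<lambda>B. ren_pt k v i ` B) ` ((C - merged) \<union> {\<Union>merged}))"

definition del_seg :: "nat \<Rightarrow> nat \<Rightarrow> seg list \<Rightarrow> seg list" where
  "del_seg v i g = map (\<lambda>(w, m, fw). if w = v \<and> i < m then (w, m - 1, fw) else (w, m, fw))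
                     (filter (\<lambda>(w, m, fw). \<not> (w = v \<and> m = i)) g)"

definition freduce :: "seg list \<Rightarrow> seg list" where
  "freduce g = foldr (\<lambda>s acc. case acc of [] \<Rightarrow> [s] | t # r \<Rightarrow> if t = seg_inv s then r else s # acc) g []"

definition contract :: "ldiag \<Rightarrow> nat \<Rightarrow> nat \<Rightarrow> ldiag" where
  "contract x v i = LDiag ((wv x)[v := wv x ! v - 1]) (contract_comps (wv x) (comps x) v i)
                          (map (\<lambda>g. freduce (del_seg v i g)) (loops x))"

definition csign :: "ldiag \<Rightarrow> nat \<Rightarrow> nat \<Rightarrow> int" where
  "csign x v i = (-1) ^ ((\<Sum>w<v. wv x ! w - 1) + i)"

text \<open>Differential on a basis element; a contraction merging two half-edges of the same
  arc component would create a black cycle (degenerate) and contributes zero.\<close>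
definition dbasis :: "ldiag \<Rightarrow> ldiag \<Rightarrow>\<^sub>0 int" where
  "dbasis x = (\<Sum>v<length (wv x). \<Sum>i<wv x ! v.
      if samecomp (comps x) (HE v i) (HE v (Suc i mod (wv x ! v))) then 0
      else frag_cmul (csign x v i) (frag_of (contract x v i)))"

definition dd :: "(ldiag \<Rightarrow>\<^sub>0 int) \<Rightarrow> (ldiag \<Rightarrow>\<^sub>0 int)" where
  "dd = frag_extend dbasis"

definition LD :: "nat \<Rightarrow> nat \<Rightarrow> nat \<Rightarrow> nat \<Rightarrow> (ldiag \<Rightarrow>\<^sub>0 int) set" where
  "LD n1 m1 n2 m2 = {f. Poly_Mapping.keys f \<subseteq> valid_ld n1 m1 n2 m2}"

definition LDcst :: "nat \<Rightarrow> nat \<Rightarrow> nat \<Rightarrow> nat \<Rightarrow> (ldiag \<Rightarrow>\<^sub>0 int) set" where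
  "LDcst n1 m1 n2 m2 = {f. Poly_Mapping.keys f \<subseteq> {x \<in> valid_ld n1 m1 n2 m2. \<exists>j\<in>{1..n1}. loops x ! (j - 1) = []}}"

definition p_basis :: "nat \<Rightarrow> ldiag \<Rightarrow> ldiag" where
  "p_basis j x = LDiag (wv x) (comps x) ((loops x)[j - 1 := []])"

definition pj :: "nat \<Rightarrow> (ldiag \<Rightarrow>\<^sub>0 int) \<Rightarrow> (ldiag \<Rightarrow>\<^sub>0 int)" where
  "pj j = frag_extend (\<lambda>x. frag_of (p_basis j x))"

definition pT :: "nat set \<Rightarrow> (ldiag \<Rightarrow>\<^sub>0 int) \<Rightarrow> (ldiag \<Rightarrow>\<^sub>0 int)" where
  "pT T = fold (\<lambda>t g. pj t \<circ> g) (sorted_list_of_set T) id"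

definition pcst :: "nat \<Rightarrow> (ldiag \<Rightarrow>\<^sub>0 int) \<Rightarrow> (ldiag \<Rightarrow>\<^sub>0 int)" where
  "pcst n1 f = (\<Sum>k\<in>{1..n1}. \<Sum>T\<in>{T. T \<subseteq> {1..n1} \<and> card T = k}. frag_cmul ((-1) ^ (k + 1)) (pT T f))"

definition LDpos :: "nat \<Rightarrow> nat \<Rightarrow> nat \<Rightarrow> nat \<Rightarrow> (ldiag \<Rightarrow>\<^sub>0 int) set" where
  "LDpos n1 m1 n2 m2 = {frag_extend (\<lambda>x. frag_of x - pcst n1 (frag_of x)) c |c. Poly_Mapping.keys c \<subseteq> valid_ld n1 m1 n2 m2}"

definition homog :: "nat \<Rightarrow> (ldiag \<Rightarrow>\<^sub>0 int) \<Rightarrow> bool" where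
  "homog n f \<longleftrightarrow> (\<forall>x\<in>Poly_Mapping.keys f. deg x = n)"

definition chain_map :: "((ldiag \<Rightarrow>\<^sub>0 int) \<Rightarrow> (ldiag \<Rightarrow>\<^sub>0 int)) \<Rightarrow> (ldiag \<Rightarrow>\<^sub>0 int) set \<Rightarrow> (ldiag \<Rightarrow>\<^sub>0 int) set \<Rightarrow> bool" where
  "chain_map F A B \<longleftrightarrow> (\<forall>f\<in>A. F f \<in> B) \<and> (\<forall>f\<in>A. \<forall>g\<in>A. F (f + g) = F f + F g) \<and>
     (\<forall>f\<in>A. \<forall>n. homog n f \<longrightarrow> homog n (F f)) \<and> (\<forall>f\<in>A. F (dd f) = dd (F f))"

text \<open>Subcomplex: a subgroup closed under d, spanned by homogeneous elements
  is not required separately (checked via the direct sum decomposition).\<close>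
definition subcomplex :: "(ldiag \<Rightarrow>\<^sub>0 int) set \<Rightarrow> (ldiag \<Rightarrow>\<^sub>0 int) set \<Rightarrow> bool" where
  "subcomplex S A \<longleftrightarrow> S \<subseteq> A \<and> 0 \<in> S \<and> (\<forall>f\<in>S. \<forall>g\<in>S. f - g \<in> S) \<and> (\<forall>f\<in>S. dd f \<in> S)"

end

theory Submission
  imports Defs
begin


definition clr :: "nat set \<Rightarrow> seg list list \<Rightarrow> seg list list" where
  "clr T l = map (\<lambda>idx. if Suc idx \<in> T then [] else l ! idx) [0..<length l]"

definition pb :: "nat set \<Rightarrow> ldiag \<Rightarrow> ldiag" where
  "pb T x = LDiag (wv x) (comps x) (clr T (loops x))"

lemma clr_empty[simp]: "clr {} l = l"
  by (simp add: clr_def map_nth)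

lemma length_clr[simp]: "length (clr T l) = length l"
  by (simp add: clr_def)

lemma nth_clr: "idx < length l \<Longrightarrow> clr T l ! idx = (if Suc idx \<in> T then [] else l ! idx)"
  by (simp add: clr_def)

lemma clr_upd: "0 < j \<Longrightarrow> (clr T l)[j-1 := []] = clr (insert j T) l"
  by (rule nth_equalityI) (auto simp: nth_clr nth_list_update)

lemma pb_empty[simp]: "pb {} x = x"
  by (simp add: pb_def)

lemma pb_wv[simp]: "wv (pb T x) = wv x" and pb_comps[simp]: "comps (pb T x) = comps x"
  and pb_loops[simp]: "loops (pb T x) = clr T (loops x)"
  by (simp_all add: pb_def)

lemma p_basis_pb: "0 < j \<Longrightarrow> p_basis j (pb T x) = pb (insert j T) x"
  using clr_upd[of j T "loops x"] by (simp add: p_basis_def pb_def)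

lemma p_basis_eq: "0 < j \<Longrightarrow> p_basis j x = pb {j} x"
  using p_basis_pb[of j "{}" x] by simp

lemma frag_extend_compose_gen:
  "frag_extend f (frag_extend g c) = frag_extend (\<lambda>x. frag_extend f (g x)) c"
  using subset_UNIV
  by (induction c rule: frag_induction) (auto simp: frag_extend_diff)

lemma pj_eq: "0 < j \<Longrightarrow> pj j = frag_extend (\<lambda>x. frag_of (pb {j} x))"
  by (simp add: pj_def p_basis_eq)

lemma fold_pj: "0 \<notin> set ts \<Longrightarrow>
   fold (\<lambda>t g. pj t \<circ> g) ts (frag_extend (\<lambda>x. frag_of (pb S x))) = frag_extend (\<lambda>x. frag_of (pb (S \<union> set ts) x))"
proof (induction ts arbitrary: S)
  case Nil then show ?case by simp
next
  case (Cons t ts)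
  have t: "0 < t" using Cons.prems by auto
  have e: "(\<lambda>c. pj t (frag_extend (\<lambda>x. frag_of (pb S x)) c)) = frag_extend (\<lambda>x. frag_of (pb (insert t S) x))"
    by (rule ext) (simp add: pj_def frag_extend_compose_gen p_basis_pb[OF t])
  have "S \<union> set (t # ts) = insert t S \<union> set ts" by auto
  then show ?case using Cons.IH[of "insert t S"] Cons.prems by (simp add: comp_def e)
qed

lemma pT_eq: "finite T \<Longrightarrow> 0 \<notin> T \<Longrightarrow> pT T = frag_extend (\<lambda>x. frag_of (pb T x))"
proof -
  assume T: "finite T" "0 \<notin> T"
  have "id = frag_extend (\<lambda>x. frag_of (pb {} x))"
    using frag_expansion by (auto simp: fun_eq_iff)
  then show ?thesis using fold_pj[of "sorted_list_of_set T" "{}"] T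
    by (simp add: pT_def)
qed

lemma additive_frag_extend:
  assumes "\<And>a b. F (a - b) = F a - F b"
  shows "F c = frag_extend (\<lambda>x. F (frag_of x)) c"
proof -
  have F0: "F 0 = 0" using assms[of 0 0] by simp
  show ?thesis using subset_UNIV
    by (induction c rule: frag_induction) (auto simp: frag_extend_diff F0 assms)
qed

lemma frag_cmul_diff2: "frag_cmul c (a - b) = frag_cmul c a - frag_cmul c b"
  by (rule poly_mapping_eqI) (simp add: lookup_minus algebra_simps)

definition Tset :: "nat \<Rightarrow> nat \<Rightarrow> nat set set" where
  "Tset n1 k = {T. T \<subseteq> {1..n1} \<and> card T = k}"

lemma finite_Tset[simp]: "finite (Tset n1 k)"
  by (rule finite_subset[of _ "Pow {1..n1}"]) (auto simp: Tset_def)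

lemma Tset_props: "T \<in> Tset n1 k \<Longrightarrow> finite T \<and> 0 \<notin> T \<and> T \<subseteq> {1..n1}"
  by (auto simp: Tset_def intro: finite_subset)

lemma pcst_alt: "pcst n1 f = (\<Sum>k\<in>{1..n1}. \<Sum>T\<in>Tset n1 k. frag_cmul ((-1) ^ (k + 1)) (frag_extend (\<lambda>x. frag_of (pb T x)) f))"
  unfolding pcst_def Tset_def[symmetric]
  by (intro sum.cong refl) (simp add: Tset_props pT_eq)

lemma pcst_diff: "pcst n1 (a - b) = pcst n1 a - pcst n1 b"
  by (simp add: pcst_alt frag_extend_diff frag_cmul_diff2 sum_subtractf)

lemma pcst_fe: "pcst n1 c = frag_extend (\<lambda>x. pcst n1 (frag_of x)) c"
  by (rule additive_frag_extend) (rule pcst_diff)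

lemma pcst_of: "pcst n1 (frag_of x) = (\<Sum>k\<in>{1..n1}. \<Sum>T\<in>Tset n1 k. frag_cmul ((-1) ^ (k + 1)) (frag_of (pb T x)))"
  by (simp add: pcst_alt)

lemma keys_pcst_of: "Poly_Mapping.keys (pcst n1 (frag_of x)) \<subseteq> {pb T x |T. T \<subseteq> {1..n1} \<and> T \<noteq> {}}"
proof -
  have "Poly_Mapping.keys (pcst n1 (frag_of x)) \<subseteq> (\<Union>k\<in>{1..n1}. \<Union>T\<in>Tset n1 k. Poly_Mapping.keys (frag_cmul ((-1) ^ (k + 1)) (frag_of (pb T x))))"
    unfolding pcst_of
    apply (rule order_trans[OF keys_sum])
    apply (rule UN_mono[OF order_refl])
    apply (rule order_trans[OF keys_sum])
    by blast
  also have "\<dots> \<subseteq> {pb T x |T. T \<subseteq> {1..n1} \<and> T \<noteq> {}}"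
    by (auto simp: Tset_def)
  finally show ?thesis .
qed


lemma freduce_Nil[simp]: "freduce [] = []"
  by (simp add: freduce_def)

lemma del_seg_Nil[simp]: "del_seg v i [] = []"
  by (simp add: del_seg_def)

lemma map_clr: "h [] = [] \<Longrightarrow> map h (clr T l) = clr T (map h l)"
  by (rule nth_equalityI) (auto simp: nth_clr)

lemma contract_pb: "contract (pb T x) v i = pb T (contract x v i)"
  by (simp add: contract_def pb_def map_clr)

lemma dbasis_beta:
  assumes "\<And>x. wv (\<beta> x) = wv x" "\<And>x. comps (\<beta> x) = comps x" "\<And>x v i. contract (\<beta> x) v i = \<beta> (contract x v i)"
  shows "dbasis (\<beta> x) = frag_extend (\<lambda>y. frag_of (\<beta> y)) (dbasis x)"
  unfolding dbasis_def
  by (simp add: frag_extend_sum comp_def csign_def assms frag_extend_cmul if_distrib[of "frag_extend _"] cong: if_cong)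

lemma dbasis_pb: "dbasis (pb T x) = frag_extend (\<lambda>y. frag_of (pb T y)) (dbasis x)"
  by (rule dbasis_beta) (simp_all add: contract_pb)

lemma commute_gen:
  assumes "\<And>x. dbasis (\<beta> x) = frag_extend (\<lambda>y. frag_of (\<beta> y)) (dbasis x)"
  shows "frag_extend (\<lambda>y. frag_of (\<beta> y)) (dd f) = dd (frag_extend (\<lambda>y. frag_of (\<beta> y)) f)"
  unfolding dd_def frag_extend_compose_gen by (simp add: assms)

lemma pb_dd: "frag_extend (\<lambda>y. frag_of (pb T y)) (dd f) = dd (frag_extend (\<lambda>y. frag_of (pb T y)) f)"
  by (rule commute_gen) (rule dbasis_pb)

lemma dd_sum: "finite I \<Longrightarrow> dd (sum g I) = (\<Sum>i\<in>I. dd (g i))"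
  by (simp add: dd_def frag_extend_sum comp_def)

lemma dd_cmul: "dd (frag_cmul c a) = frag_cmul c (dd a)"
  by (simp add: dd_def frag_extend_cmul)

lemma dd_diff: "dd (a - b) = dd a - dd b"
  by (simp add: dd_def frag_extend_diff)

lemma dd_add: "dd (a + b) = dd a + dd b"
  by (simp add: dd_def frag_extend_add)

lemma pcst_dd: "pcst n1 (dd f) = dd (pcst n1 f)"
  by (simp add: pcst_alt dd_sum dd_cmul pb_dd)

lemma pj_dd: "0 < j \<Longrightarrow> pj j (dd f) = dd (pj j f)"
  by (simp add: pj_eq pb_dd)

lemma pb_insert_const: "0 < j0 \<Longrightarrow> loops x ! (j0 - 1) = [] \<Longrightarrow> pb (insert j0 T) x = pb T x"
  unfolding pb_def by (auto intro!: nth_equalityI simp: nth_clr)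

lemma cmul_suc: "frag_cmul ((-1)^(Suc n)) y = - frag_cmul ((-1)^n) y"
  by simp

lemma pcst_const:
  assumes j0: "j0 \<in> {1..n1}" and c: "loops x ! (j0 - 1) = []"
  shows "pcst n1 (frag_of x) = frag_of x"
proof -
  define A where "A = {1..n1::nat}"
  define g where "g T = frag_of (pb T x)" for T
  define h where "h T = frag_cmul ((-1) ^ card T) (g T)" for T
  have fA: "finite A" by (simp add: A_def)
  have gins: "g (insert j0 T) = g T" for T
    unfolding g_def using pb_insert_const[OF _ c] j0 by auto
  have "pcst n1 (frag_of x) = (\<Sum>k\<in>A. \<Sum>T\<in>{T\<in>Pow A - {{}}. card T = k}. frag_cmul ((-1) ^ (card T + 1)) (g T))"
    unfolding pcst_of A_def g_def
  proof (intro sum.cong refl)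
    fix k T assume k: "k \<in> {1..n1}" and T: "T \<in> {T \<in> Pow {1..n1} - {{}}. card T = k}"
    then show "frag_cmul ((- 1) ^ (k + 1)) (frag_of (pb T x)) = frag_cmul ((- 1) ^ (card T + 1)) (frag_of (pb T x))" by simp
  next
    fix k assume k: "k \<in> {1..n1}"
    then show "Tset n1 k = {T \<in> Pow {1..n1} - {{}}. card T = k}"
      by (auto simp: Tset_def)
  qed
  also have "\<dots> = (\<Sum>T\<in>Pow A - {{}}. frag_cmul ((-1) ^ (card T + 1)) (g T))"
  proof (rule sum.group)
    show "finite (Pow A - {{}})" using fA by simp
    show "finite A" by (rule fA)
    show "card ` (Pow A - {{}}) \<subseteq> A"
    proof
      fix k assume "k \<in> card ` (Pow A - {{}})"
      then obtain T where T: "T \<subseteq> A" "T \<noteq> {}" "k = card T" by auto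
      have fT: "finite T" using T fA finite_subset by blast
      have "card T \<le> card A" by (rule card_mono[OF fA T(1)])
      moreover have "card T \<ge> 1" using T fT by (simp add: Suc_le_eq card_gt_0_iff)
      ultimately show "k \<in> A" using T by (simp add: A_def)
    qed
  qed
  also have "\<dots> = - (\<Sum>T\<in>Pow A - {{}}. h T)"
    by (simp add: h_def sum_negf[symmetric])
  finally have p: "pcst n1 (frag_of x) = - (\<Sum>T\<in>Pow A - {{}}. h T)" .
  define A' where "A' = A - {j0}"
  have AA: "A = insert j0 A'" "j0 \<notin> A'" using j0 by (auto simp: A_def A'_def)
  have fA': "finite A'" using fA by (simp add: A'_def)
  have "(\<Sum>T\<in>Pow A. h T) = (\<Sum>T\<in>Pow A'. h T) + (\<Sum>T\<in>insert j0 ` Pow A'. h T)"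
    unfolding AA(1) Pow_insert
    by (rule sum.union_disjoint) (use fA' AA(2) in auto)
  also have "(\<Sum>T\<in>insert j0 ` Pow A'. h T) = (\<Sum>T\<in>Pow A'. h (insert j0 T))"
    by (rule sum.reindex_cong[where l="insert j0"]) (use AA(2) in \<open>auto simp: inj_on_def\<close>)
  also have "\<dots> = (\<Sum>T\<in>Pow A'. - h T)"
  proof (rule sum.cong[OF refl])
    fix T assume "T \<in> Pow A'"
    then have "finite T" "j0 \<notin> T" using fA' AA(2) finite_subset by auto
    then show "h (insert j0 T) = - h T" by (simp add: h_def gins)
  qed
  finally have z: "(\<Sum>T\<in>Pow A. h T) = 0" by (simp add: sum_negf)
  have "(\<Sum>T\<in>Pow A. h T) = h {} + (\<Sum>T\<in>Pow A - {{}}. h T)"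
    by (rule sum.remove) (use fA in auto)
  then have "(\<Sum>T\<in>Pow A - {{}}. h T) = - h {}" using z by (simp add: add_eq_0_iff)
  then show ?thesis using p by (simp add: h_def g_def)
qed

lemma keys_pb_extend: "Poly_Mapping.keys (frag_extend (\<lambda>y. frag_of (pb T y)) f) \<subseteq> pb T ` Poly_Mapping.keys f"
  using keys_frag_extend[of "\<lambda>y. frag_of (pb T y)" f] by auto


section \<open>General facts on walks and free reduction\<close>

fun walk :: "pt set set \<Rightarrow> nat list \<Rightarrow> pt \<Rightarrow> seg list \<Rightarrow> pt \<Rightarrow> bool" where
  "walk C ks p [] q = samecomp C p q"
| "walk C ks p (s # g) q = (samecomp C p (seg_src ks s) \<and> walk C ks (seg_tgt ks s) g q)"

definition pdisj :: "pt set set \<Rightarrow> bool" where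
  "pdisj C \<longleftrightarrow> (\<forall>B\<in>C. \<forall>B'\<in>C. B \<noteq> B' \<longrightarrow> B \<inter> B' = {})"

definition inrange :: "nat list \<Rightarrow> seg \<Rightarrow> bool" where
  "inrange ks s = (case s of (w, m, fw) \<Rightarrow> w < length ks \<and> m < ks ! w)"

definition conn :: "pt set set \<Rightarrow> nat list \<Rightarrow> seg \<Rightarrow> seg \<Rightarrow> bool" where
  "conn C ks s t = samecomp C (seg_tgt ks s) (seg_src ks t)"

definition red :: "seg \<Rightarrow> seg \<Rightarrow> bool" where
  "red s t = (t \<noteq> seg_inv s)"

lemma samecomp_trans: "pdisj C \<Longrightarrow> samecomp C p q \<Longrightarrow> samecomp C q r \<Longrightarrow> samecomp C p r"
  unfolding pdisj_def samecomp_def by blast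

lemma samecomp_sym: "samecomp C p q \<Longrightarrow> samecomp C q p"
  unfolding samecomp_def by blast

lemma walk_iff: "walk C ks p g q \<longleftrightarrow> (if g = [] then samecomp C p q else
     samecomp C p (seg_src ks (hd g)) \<and> samecomp C (seg_tgt ks (last g)) q \<and> successively (conn C ks) g)"
proof (induction g arbitrary: p)
  case Nil then show ?case by simp
next
  case (Cons s g) then show ?case by (cases g) (auto simp: conn_def)
qed

lemma walk_trans: "pdisj C \<Longrightarrow> samecomp C p q \<Longrightarrow> walk C ks q g r \<Longrightarrow> walk C ks p g r"
  by (cases g) (auto intro: samecomp_trans)

lemma src_inv[simp]: "seg_src ks (seg_inv s) = seg_tgt ks s"
  and tgt_inv[simp]: "seg_tgt ks (seg_inv s) = seg_src ks s"
  by (cases s; auto simp: seg_src_def seg_tgt_def seg_inv_def)+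

lemma freduce_Cons: "freduce (s # g) = (case freduce g of [] \<Rightarrow> [s] | t # r \<Rightarrow> if t = seg_inv s then r else s # t # r)"
  by (simp add: freduce_def split: list.split)

lemma set_freduce: "set (freduce g) \<subseteq> set g"
proof (induction g)
  case Nil then show ?case by simp
next
  case (Cons s g) then show ?case by (auto simp: freduce_Cons split: list.split)
qed

lemma successively_tl: "successively P (x # xs) \<Longrightarrow> successively P xs"
  by (cases xs) auto

lemma freduce_red: "successively red (freduce g)"
proof (induction g)
  case Nil then show ?case by simp
next
  case (Cons s g) then show ?case
    by (auto simp: freduce_Cons red_def split: list.split dest: successively_tl)
qed

lemma walk_freduce: "pdisj C \<Longrightarrow> walk C ks p g q \<Longrightarrow> walk C ks p (freduce g) q"
proof (induction g arbitrary: p)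
  case Nil then show ?case by simp
next
  case (Cons s g)
  then have 1: "samecomp C p (seg_src ks s)" and 2: "walk C ks (seg_tgt ks s) (freduce g) q" by auto
  show ?case
  proof (cases "freduce g")
    case Nil then show ?thesis using 1 2 by (simp add: freduce_Cons)
  next
    case (Cons t r)
    show ?thesis
    proof (cases "t = seg_inv s")
      case True
      then have "walk C ks (seg_src ks s) r q" using 2 Cons by simp
      then show ?thesis using True Cons 1 walk_trans[OF \<open>pdisj C\<close>] by (simp add: freduce_Cons)
    qed (use 1 2 Cons in \<open>simp add: freduce_Cons\<close>)
  qed
qed

lemma valid_loop_iff:
  assumes "samecomp C (Leaf j) (Leaf j)"
  shows "valid_loop ks C j g \<longleftrightarrow> (\<forall>s\<in>set g. inrange ks s) \<and> walk C ks (Leaf j) g (Leaf j) \<and> successively red g"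
  unfolding valid_loop_def walk_iff successively_conv_nth conn_def red_def inrange_def
  using assms by auto

section \<open>Arithmetic on new indices\<close>

lemma suc_mod: "m < k \<Longrightarrow> Suc m mod k = (if Suc m = k then 0 else Suc m)"
  by auto

lemma new_idx_lt: "2 \<le> k \<Longrightarrow> i < k \<Longrightarrow> m < k \<Longrightarrow> new_idx k i m < k - 1"
  unfolding new_idx_def by auto

lemma new_idx_surj: "2 \<le> k \<Longrightarrow> i < k \<Longrightarrow> m' < k - 1 \<Longrightarrow> \<exists>m<k. new_idx k i m = m'"
proof -
  assume a: "2 \<le> k" "i < k" "m' < k - 1"
  show ?thesis
  proof (cases "m' \<le> i")
    case True then show ?thesis using a by (intro exI[of _ m']) (auto simp: new_idx_def)
  next
    case False then show ?thesis using a by (intro exI[of _ "Suc m'"]) (auto simp: new_idx_def)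
  qed
qed

lemma new_idx_inj: "2 \<le> k \<Longrightarrow> i < k \<Longrightarrow> m < k \<Longrightarrow> m' < k \<Longrightarrow> new_idx k i m = new_idx k i m' \<Longrightarrow> m \<noteq> m'
   \<Longrightarrow> m \<in> {i, Suc i mod k} \<and> m' \<in> {i, Suc i mod k}"
  unfolding new_idx_def by (auto simp: suc_mod split: if_splits)

lemma new_idx_ab: "2 \<le> k \<Longrightarrow> i < k \<Longrightarrow> new_idx k i i = new_idx k i (Suc i mod k)"
  unfolding new_idx_def by (auto simp: suc_mod)

lemma new_idx_seg: "2 \<le> k \<Longrightarrow> i < k \<Longrightarrow> m < k \<Longrightarrow> m \<noteq> i \<Longrightarrow>
   new_idx k i m = (if i < m then m - 1 else m) \<and>
   new_idx k i (Suc m mod k) = Suc (if i < m then m - 1 else m) mod (k - 1)"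
  unfolding new_idx_def by (auto simp: suc_mod)

lemma HE_points[simp]: "HE w m \<in> points n1 m1 m2 ks \<longleftrightarrow> w < length ks \<and> m < ks ! w"
  by (auto simp: points_def)

lemma Leaf_points[simp]: "Leaf l \<in> points n1 m1 m2 ks \<longleftrightarrow> 1 \<le> l \<and> l \<le> n1 + m1 + m2"
  by (auto simp: points_def)

lemma finite_points: "finite (points n1 m1 m2 ks)"
proof -
  have "{HE v i |v i. v < length ks \<and> i < ks ! v} = (\<lambda>(v, i). HE v i) ` (SIGMA v:{..<length ks}. {..<ks ! v})"
    by auto
  moreover have "{Leaf l |l. 1 \<le> l \<and> l \<le> n1 + m1 + m2} = Leaf ` {1..n1 + m1 + m2}" by auto
  ultimately show ?thesis unfolding points_def by simp
qed


definition rs :: "nat \<Rightarrow> nat \<Rightarrow> seg \<Rightarrow> seg" where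
  "rs v i s = (case s of (w, m, fw) \<Rightarrow> if w = v \<and> i < m then (w, m - 1, fw) else (w, m, fw))"

lemma del_seg_Cons: "del_seg v i (s # g) =
   (if fst s = v \<and> fst (snd s) = i then del_seg v i g else rs v i s # del_seg v i g)"
  by (cases s) (simp add: del_seg_def rs_def)

locale ctr =
  fixes n1 m1 n2 m2 :: nat and x :: ldiag and v i :: nat
  assumes xv: "x \<in> valid_ld n1 m1 n2 m2" and vl: "v < length (wv x)" and il: "i < wv x ! v"
    and ns: "\<not> samecomp (comps x) (HE v i) (HE v (Suc i mod (wv x ! v)))"
begin

abbreviation "ks \<equiv> wv x"
abbreviation "CC \<equiv> comps x"
abbreviation "kk \<equiv> ks ! v"
abbreviation "aa \<equiv> HE v i"
abbreviation "bb \<equiv> HE v (Suc i mod kk)"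
abbreviation "ff \<equiv> ren_pt kk v i"
abbreviation "ks' \<equiv> ks[v := kk - 1]"
abbreviation "PP \<equiv> points n1 m1 m2 ks"
abbreviation "PP' \<equiv> points n1 m1 m2 ks'"
abbreviation "MM \<equiv> {B\<in>CC. aa \<in> B \<or> bb \<in> B}"
abbreviation "DD \<equiv> (CC - MM) \<union> {\<Union>MM}"
abbreviation "CC' \<equiv> contract_comps ks CC v i"

lemma vd: "valid_diag n1 m1 n2 m2 ks CC" using xv by (simp add: valid_ld_def)

lemma lenks: "length ks = n2" and pos: "\<And>w. w < n2 \<Longrightarrow> 1 \<le> ks ! w" and UC: "\<Union>CC = PP"
  and disjC: "pdisj CC" and cardC: "\<And>B. B \<in> CC \<Longrightarrow> 2 \<le> card B \<and> (\<exists>v i. HE v i \<in> B)"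
  and connC: "\<And>w w'. w < n2 \<Longrightarrow> w' < n2 \<Longrightarrow> (w, w') \<in> (wconn CC)\<^sup>*"
  using vd unfolding valid_diag_def pdisj_def by auto

lemma aP: "aa \<in> PP" using vl il by simp

lemma k2: "2 \<le> kk"
proof (rule ccontr)
  assume "\<not> 2 \<le> kk"
  moreover have "1 \<le> kk" using pos vl lenks by auto
  ultimately have "kk = 1" by simp
  then have "bb = aa" using il by simp
  moreover obtain B where "B \<in> CC" "aa \<in> B" using aP UC by blast
  ultimately show False using ns unfolding samecomp_def by auto
qed

lemma bP: "bb \<in> PP" using vl k2 by simp

lemma abU: "aa \<in> \<Union>CC" "bb \<in> \<Union>CC" using aP bP UC by simp_all

lemma ff_HE: "ff (HE w m) = (if w = v then HE v (new_idx kk i m) else HE w m)"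
  and ff_Leaf[simp]: "ff (Leaf l) = Leaf l"
  by (simp_all add: ren_pt_def)

lemma len': "length ks' = length ks" by simp

lemma ks'_nth: "ks' ! w = (if w = v then kk - 1 else ks ! w)"
  "ks[v := kk - Suc 0] ! w = (if w = v then kk - Suc 0 else ks ! w)"
  using vl by simp_all

lemma fP: "ff ` PP = PP'"
proof
  show "ff ` PP \<subseteq> PP'"
  proof
    fix p' assume "p' \<in> ff ` PP"
    then obtain p where p: "p \<in> PP" "p' = ff p" by auto
    show "p' \<in> PP'"
    proof (cases p)
      case (HE w m) then show ?thesis using p new_idx_lt[OF k2 il] by (auto simp: ff_HE ks'_nth)
    next
      case (Leaf l) then show ?thesis using p by simp
    qed
  qed
next
  show "PP' \<subseteq> ff ` PP"
  proof
    fix p' assume p': "p' \<in> PP'"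
    show "p' \<in> ff ` PP"
    proof (cases p')
      case (HE w m')
      show ?thesis
      proof (cases "w = v")
        case True
        then have "m' < kk - 1" using p' HE by (simp add: ks'_nth)
        then obtain m where "m < kk" "new_idx kk i m = m'" using new_idx_surj[OF k2 il] by blast
        then show ?thesis using HE True vl by (intro image_eqI[of _ _ "HE v m"]) (auto simp: ff_HE)
      next
        case False
        then show ?thesis using HE p' by (intro image_eqI[of _ _ "HE w m'"]) (auto simp: ff_HE ks'_nth)
      qed
    next
      case (Leaf l) then show ?thesis using p' by (intro image_eqI[of _ _ "Leaf l"]) auto
    qed
  qed
qed

lemma f_inj: "p \<in> PP \<Longrightarrow> q \<in> PP \<Longrightarrow> ff p = ff q \<Longrightarrow> p \<noteq> q \<Longrightarrow> p \<in> {aa, bb} \<and> q \<in> {aa, bb}"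
proof (cases p; cases q)
  fix w m w' m' assume pq: "p \<in> PP" "q \<in> PP" "ff p = ff q" "p \<noteq> q" and p: "p = HE w m" and q: "q = HE w' m'"
  then have "w = w'" by (auto simp: ff_HE split: if_splits)
  show ?thesis
  proof (cases "w = v")
    case True
    then have "new_idx kk i m = new_idx kk i m'" "m \<noteq> m'" "m < kk" "m' < kk"
      using pq p q \<open>w = w'\<close> by (auto simp: ff_HE)
    from new_idx_inj[OF k2 il this(3,4,1,2)] show ?thesis using p q True \<open>w = w'\<close> by auto
  next
    case False
    then show ?thesis using pq p q \<open>w = w'\<close> by (auto simp: ff_HE)
  qed
qed (auto simp: ff_HE split: if_splits)

lemma fab: "ff aa = ff bb"
  using new_idx_ab[OF k2 il] by (simp add: ff_HE)

lemma CC'_eq: "CC' = (\<lambda>B. ff ` B) ` DD"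
  by (simp add: contract_comps_def Let_def)

lemma UD: "\<Union>DD = PP"
proof -
  have "\<Union>DD = \<Union>CC"
  proof (rule equalityI)
    show "\<Union>DD \<subseteq> \<Union>CC" by auto
  next
    show "\<Union>CC \<subseteq> \<Union>DD"
    proof
      fix z assume "z \<in> \<Union>CC"
      then obtain B where "B \<in> CC" "z \<in> B" by auto
      then show "z \<in> \<Union>DD" by (cases "B \<in> MM") auto
    qed
  qed
  then show ?thesis using UC by simp
qed

lemma abUM: "aa \<in> \<Union>MM" "bb \<in> \<Union>MM"
proof -
  have "aa \<in> \<Union>CC" using aP UC by simp
  then obtain B where "B \<in> CC" "aa \<in> B" by (rule UnionE)
  then show "aa \<in> \<Union>MM" by auto
  have "bb \<in> \<Union>CC" using bP UC by simp
  then obtain B where "B \<in> CC" "bb \<in> B" by (rule UnionE)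
  then show "bb \<in> \<Union>MM" by auto
qed

lemma abD: "B \<in> DD \<Longrightarrow> aa \<in> B \<or> bb \<in> B \<Longrightarrow> B = \<Union>MM"
  by auto

lemma disjD: "B1 \<in> DD \<Longrightarrow> B2 \<in> DD \<Longrightarrow> B1 \<noteq> B2 \<Longrightarrow> B1 \<inter> B2 = {}"
  using disjC unfolding pdisj_def by blast

lemma disjC': "pdisj CC'"
  unfolding pdisj_def CC'_eq
proof (intro ballI impI)
  fix B1' B2' assume B1': "B1' \<in> (\<lambda>B. ff ` B) ` DD" and B2': "B2' \<in> (\<lambda>B. ff ` B) ` DD" and ne: "B1' \<noteq> B2'"
  from B1' obtain B1 where B1: "B1 \<in> DD" "B1' = ff ` B1" by auto
  from B2' obtain B2 where B2: "B2 \<in> DD" "B2' = ff ` B2" by auto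
  have ne': "B1 \<noteq> B2" using ne B1 B2 by auto
  show "B1' \<inter> B2' = {}"
  proof (rule ccontr)
    assume "B1' \<inter> B2' \<noteq> {}"
    then obtain y1 y2 where y: "y1 \<in> B1" "y2 \<in> B2" "ff y1 = ff y2" using B1 B2 by auto
    have "y1 \<noteq> y2" using disjD[OF B1(1) B2(1) ne'] y by auto
    moreover have "y1 \<in> PP" "y2 \<in> PP" using y B1 B2 UD by auto
    ultimately have "y1 \<in> {aa, bb}" "y2 \<in> {aa, bb}" using f_inj y(3) by blast+
    then have "B1 = \<Union>MM" "B2 = \<Union>MM" using abD[OF B1(1)] abD[OF B2(1)] y by auto
    then show False using ne' by simp
  qed
qed

lemma UC': "\<Union>CC' = PP'"
proof -
  have "\<Union>CC' = ff ` \<Union>DD" unfolding CC'_eq by (rule image_Union[symmetric])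
  then show ?thesis using UD fP by simp
qed

lemma finP: "finite PP" by (rule finite_points)

lemma inj_avoid: "B \<subseteq> PP \<Longrightarrow> bb \<notin> B \<Longrightarrow> inj_on ff B"
proof (rule inj_onI)
  fix p q assume B: "B \<subseteq> PP" "bb \<notin> B" and pq: "p \<in> B" "q \<in> B" "ff p = ff q"
  show "p = q"
  proof (rule ccontr)
    assume ne: "p \<noteq> q"
    have "p \<in> PP" "q \<in> PP" using B pq by auto
    then have "p \<in> {aa, bb} \<and> q \<in> {aa, bb}" using f_inj pq(3) ne by simp
    then show False using ne pq B by auto
  qed
qed

lemma ff_HE_ex: "\<exists>m'. ff (HE w m) = HE w m'"
  by (simp add: ff_HE)

lemma cardC': "B' \<in> CC' \<Longrightarrow> 2 \<le> card B' \<and> (\<exists>v i. HE v i \<in> B')"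
proof -
  assume "B' \<in> CC'"
  then obtain B where B: "B \<in> DD" "B' = ff ` B" unfolding CC'_eq by auto
  show ?thesis
  proof (cases "B \<in> CC - MM")
    case True
    then have BC: "B \<in> CC" and "bb \<notin> B" by auto
    have "B \<subseteq> PP" using BC UC by auto
    then have "inj_on ff B" using inj_avoid \<open>bb \<notin> B\<close> by simp
    then have "card B' = card B" using B(2) by (simp add: card_image)
    moreover obtain w m where wm: "HE w m \<in> B" using cardC[OF BC] by blast
    moreover obtain m' where "ff (HE w m) = HE w m'" using ff_HE_ex by blast
    ultimately show ?thesis using cardC[OF BC] B(2) wm by (metis imageI)
  next
    case False
    then have BM: "B = \<Union>MM" using B by auto
    obtain Ba where Ba: "Ba \<in> CC" "aa \<in> Ba" using abU(1) by (rule UnionE)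
    obtain Bb where Bb: "Bb \<in> CC" "bb \<in> Bb" using abU(2) by (rule UnionE)
    have "Ba \<noteq> Bb" using ns Ba Bb unfolding samecomp_def by auto
    then have "Ba \<inter> Bb = {}" using disjC Ba Bb unfolding pdisj_def by simp
    then have "bb \<notin> Ba" using Bb by auto
    moreover have "Ba \<subseteq> PP" using Ba UC by auto
    ultimately have "inj_on ff Ba" using inj_avoid by simp
    then have c1: "card (ff ` Ba) = card Ba" by (simp add: card_image)
    have sub: "ff ` Ba \<subseteq> B'" using BM B(2) Ba by auto
    have "B \<subseteq> PP" using B(1) UD by auto
    then have "finite B'" using B(2) finP finite_subset by auto
    then have "card (ff ` Ba) \<le> card B'" using sub by (rule card_mono)
    then have "2 \<le> card B'" using c1 cardC[OF Ba(1)] by simp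
    moreover have "ff aa \<in> B'" using sub Ba by auto
    moreover have "ff aa = HE v (new_idx kk i i)" by (simp add: ff_HE)
    ultimately show ?thesis by metis
  qed
qed

lemma blockD: "B \<in> CC \<Longrightarrow> \<exists>B0\<in>DD. B \<subseteq> B0"
proof -
  assume B: "B \<in> CC"
  show ?thesis
  proof (cases "B \<in> MM")
    case True
    have "\<Union>MM \<in> DD" by simp
    moreover have "B \<subseteq> \<Union>MM" using True by (rule Union_upper)
    ultimately show ?thesis by (rule bexI[rotated])
  next
    case False
    then have "B \<in> DD" using B by simp
    then show ?thesis by (rule bexI[rotated]) simp
  qed
qed

lemma img_in: "B0 \<in> DD \<Longrightarrow> ff ` B0 \<in> CC'"
  unfolding CC'_eq by (rule imageI)

lemma samecomp_map: "samecomp CC p q \<Longrightarrow> samecomp CC' (ff p) (ff q)"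
proof -
  assume "samecomp CC p q"
  then obtain B where B: "B \<in> CC" "p \<in> B" "q \<in> B" unfolding samecomp_def by blast
  obtain B0 where B0: "B0 \<in> DD" "B \<subseteq> B0" using blockD[OF B(1)] by blast
  have "ff p \<in> ff ` B0" "ff q \<in> ff ` B0" using B B0 by auto
  then show ?thesis unfolding samecomp_def using img_in[OF B0(1)] by blast
qed

lemma wconn_mono: "wconn CC \<subseteq> wconn CC'"
proof
  fix e assume "e \<in> wconn CC"
  then obtain w w' B c d where e: "e = (w, w')" "B \<in> CC" "HE w c \<in> B" "HE w' d \<in> B" unfolding wconn_def by blast
  obtain B0 where B0: "B0 \<in> DD" "B \<subseteq> B0" using blockD[OF e(2)] by blast
  obtain c' where c': "ff (HE w c) = HE w c'" using ff_HE_ex by blast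
  obtain d' where d': "ff (HE w' d) = HE w' d'" using ff_HE_ex by blast
  have "HE w c' \<in> ff ` B0" using c' e(3) B0(2) by (metis imageI subsetD)
  moreover have "HE w' d' \<in> ff ` B0" using d' e(4) B0(2) by (metis imageI subsetD)
  moreover have "ff ` B0 \<in> CC'" by (rule img_in[OF B0(1)])
  ultimately show "e \<in> wconn CC'" unfolding wconn_def e by blast
qed

lemma vd': "valid_diag n1 m1 n2 m2 ks' CC'"
  unfolding valid_diag_def
proof (intro conjI allI impI ballI)
  show "length ks' = n2" using lenks by simp
next
  fix w assume "w < n2"
  then show "1 \<le> ks' ! w" using pos k2 by (auto simp: ks'_nth)
next
  show "\<Union>CC' = PP'" by (rule UC')
next
  fix B B' assume "B \<in> CC'" "B' \<in> CC'" "B \<noteq> B'"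
  then show "B \<inter> B' = {}" using disjC' unfolding pdisj_def by blast
next
  fix B assume "B \<in> CC'" then show "2 \<le> card B" using cardC' by blast
next
  fix B assume "B \<in> CC'" then show "\<exists>v i. HE v i \<in> B" using cardC' by blast
next
  fix w w' assume "w < n2" "w' < n2"
  then show "(w, w') \<in> (wconn CC')\<^sup>*" using connC rtrancl_mono[OF wconn_mono] by blast
qed

lemma seg_ren: "inrange ks s \<Longrightarrow> \<not> (fst s = v \<and> fst (snd s) = i) \<Longrightarrow>
   seg_src ks' (rs v i s) = ff (seg_src ks s) \<and> seg_tgt ks' (rs v i s) = ff (seg_tgt ks s)"
proof (cases s)
  case (fields w m fw)
  assume r: "inrange ks s" and nd: "\<not> (fst s = v \<and> fst (snd s) = i)"
  show ?thesis
  proof (cases "w = v")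
    case True
    then have "m < kk" "m \<noteq> i" using r nd fields by (auto simp: inrange_def)
    from new_idx_seg[OF k2 il this] show ?thesis using True fields
      by (auto simp: rs_def seg_src_def seg_tgt_def ff_HE ks'_nth)
  next
    case False
    then show ?thesis using fields by (auto simp: rs_def seg_src_def seg_tgt_def ff_HE ks'_nth)
  qed
qed

lemma seg_del: "fst s = v \<Longrightarrow> fst (snd s) = i \<Longrightarrow> ff (seg_src ks s) = ff (seg_tgt ks s)"
  using fab by (cases s) (auto simp: seg_src_def seg_tgt_def)

lemma range_del: "\<forall>s\<in>set g. inrange ks s \<Longrightarrow> \<forall>s\<in>set (del_seg v i g). inrange ks' s"
proof (induction g)
  case Nil then show ?case by simp
next
  case (Cons s g)
  have "inrange ks' (rs v i s)" if "\<not> (fst s = v \<and> fst (snd s) = i)"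
    using Cons.prems that il vl
    by (cases s) (auto simp: inrange_def rs_def ks'_nth)
  then show ?case using Cons by (auto simp: del_seg_Cons)
qed

lemma walk_del: "\<forall>s\<in>set g. inrange ks s \<Longrightarrow> walk CC ks p g q \<Longrightarrow> walk CC' ks' (ff p) (del_seg v i g) (ff q)"
proof (induction g arbitrary: p)
  case Nil then show ?case by (simp add: samecomp_map)
next
  case (Cons s g)
  then have r: "inrange ks s" and 1: "samecomp CC p (seg_src ks s)" and 2: "walk CC' ks' (ff (seg_tgt ks s)) (del_seg v i g) (ff q)"
    by auto
  show ?case
  proof (cases "fst s = v \<and> fst (snd s) = i")
    case True
    have "samecomp CC' (ff p) (ff (seg_tgt ks s))" using samecomp_map[OF 1] seg_del True by simp
    then show ?thesis using walk_trans[OF disjC' _ 2] True by (simp add: del_seg_Cons)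
  next
    case False
    have "del_seg v i (s # g) = rs v i s # del_seg v i g" using False by (simp add: del_seg_Cons)
    then show ?thesis using seg_ren[OF r False] samecomp_map[OF 1] 2 by simp
  qed
qed

lemma loop_valid': "j \<in> {1..n1} \<Longrightarrow> valid_loop ks CC j g \<Longrightarrow> valid_loop ks' CC' j (freduce (del_seg v i g))"
proof -
  assume j: "j \<in> {1..n1}" and vlp: "valid_loop ks CC j g"
  have "Leaf j \<in> PP" "Leaf j \<in> PP'" using j by auto
  then have s1: "samecomp CC (Leaf j) (Leaf j)" and s2: "samecomp CC' (Leaf j) (Leaf j)"
    using UC UC' unfolding samecomp_def by blast+
  from vlp have r: "\<forall>s\<in>set g. inrange ks s" and w: "walk CC ks (Leaf j) g (Leaf j)"
    using valid_loop_iff[OF s1] by auto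
  have "walk CC' ks' (Leaf j) (del_seg v i g) (Leaf j)" using walk_del[OF r w] by simp
  then have "walk CC' ks' (Leaf j) (freduce (del_seg v i g)) (Leaf j)" by (rule walk_freduce[OF disjC'])
  moreover have "\<forall>s\<in>set (freduce (del_seg v i g)). inrange ks' s" using range_del[OF r] set_freduce by blast
  ultimately show ?thesis using valid_loop_iff[OF s2] freduce_red by blast
qed

lemma contract_valid: "contract x v i \<in> valid_ld n1 m1 n2 m2"
proof -
  have L: "length (loops x) = n1" and V: "\<And>j. j \<in> {1..n1} \<Longrightarrow> valid_loop ks CC j (loops x ! (j - 1))"
    using xv by (auto simp: valid_ld_def)
  show ?thesis
    unfolding valid_ld_def contract_def using vd' L loop_valid'[OF _ V] by auto
qed

end

lemma contract_valid:
  "x \<in> valid_ld n1 m1 n2 m2 \<Longrightarrow> v < length (wv x) \<Longrightarrow> i < wv x ! v \<Longrightarrow>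
   \<not> samecomp (comps x) (HE v i) (HE v (Suc i mod (wv x ! v))) \<Longrightarrow> contract x v i \<in> valid_ld n1 m1 n2 m2"
  by (rule ctr.contract_valid) (unfold_locales)


lemma valid_loop_Nil: "valid_loop ks C j []"
  by (simp add: valid_loop_def)

lemma pb_valid: "x \<in> valid_ld n1 m1 n2 m2 \<Longrightarrow> pb T x \<in> valid_ld n1 m1 n2 m2"
proof -
  assume x: "x \<in> valid_ld n1 m1 n2 m2"
  then have L: "length (loops x) = n1" by (simp add: valid_ld_def)
  have "valid_loop (wv x) (comps x) j (clr T (loops x) ! (j - 1))" if j: "j \<in> {1..n1}" for j
  proof -
    have "j - 1 < length (loops x)" using j L by auto
    then have e: "clr T (loops x) ! (j - 1) = (if j \<in> T then [] else loops x ! (j - 1))"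
      using j by (simp add: nth_clr)
    show ?thesis using x j unfolding e by (auto simp: valid_ld_def valid_loop_Nil)
  qed
  then show ?thesis using x by (simp add: valid_ld_def)
qed

lemma pb_const: "x \<in> valid_ld n1 m1 n2 m2 \<Longrightarrow> j \<in> T \<Longrightarrow> T \<subseteq> {1..n1} \<Longrightarrow> loops (pb T x) ! (j - 1) = []"
proof -
  assume x: "x \<in> valid_ld n1 m1 n2 m2" and j: "j \<in> T" "T \<subseteq> {1..n1}"
  then have "j \<in> {1..n1}" "length (loops x) = n1" by (auto simp: valid_ld_def)
  then have "j - 1 < length (loops x)" "Suc (j - 1) = j" by auto
  then show ?thesis using j by (simp add: nth_clr)
qed

lemma deg_pb[simp]: "deg (pb T x) = deg x"
  by (simp add: deg_def)

definition cset :: "ldiag \<Rightarrow> ldiag set" where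
  "cset x = {contract x v i |v i. v < length (wv x) \<and> i < wv x ! v \<and> \<not> samecomp (comps x) (HE v i) (HE v (Suc i mod (wv x ! v)))}"

lemma keys_dbasis: "Poly_Mapping.keys (dbasis x) \<subseteq> cset x"
proof -
  have "Poly_Mapping.keys (if samecomp (comps x) (HE v i) (HE v (Suc i mod (wv x ! v))) then 0
          else frag_cmul (csign x v i) (frag_of (contract x v i))) \<subseteq> cset x"
    if "v < length (wv x)" "i < wv x ! v" for v i
  proof (cases "samecomp (comps x) (HE v i) (HE v (Suc i mod (wv x ! v)))")
    case True then show ?thesis by simp
  next
    case False
    then have "contract x v i \<in> cset x" unfolding cset_def using that by blast
    moreover have "Poly_Mapping.keys (frag_cmul (csign x v i) (frag_of (contract x v i))) \<subseteq> {contract x v i}"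
      using keys_cmul[of "csign x v i" "frag_of (contract x v i)"] by simp
    ultimately show ?thesis using False by auto
  qed
  then show ?thesis unfolding dbasis_def
    by (intro order_trans[OF keys_sum] UN_least) auto
qed

lemma contract_const: "j - 1 < length (loops x) \<Longrightarrow> loops x ! (j - 1) = [] \<Longrightarrow> loops (contract x v i) ! (j - 1) = []"
  by (simp add: contract_def)

lemma keys_dd: "Poly_Mapping.keys (dd f) \<subseteq> (\<Union>x\<in>Poly_Mapping.keys f. Poly_Mapping.keys (dbasis x))"
  unfolding dd_def by (rule keys_frag_extend)

lemma dd_LD: "f \<in> LD n1 m1 n2 m2 \<Longrightarrow> dd f \<in> LD n1 m1 n2 m2"
proof -
  assume f: "f \<in> LD n1 m1 n2 m2"
  have "y \<in> valid_ld n1 m1 n2 m2" if y: "y \<in> Poly_Mapping.keys (dd f)" for y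
  proof -
    obtain x where x: "x \<in> Poly_Mapping.keys f" "y \<in> Poly_Mapping.keys (dbasis x)" using y keys_dd by blast
    then have xv: "x \<in> valid_ld n1 m1 n2 m2" using f by (auto simp: LD_def)
    have "y \<in> cset x" using x(2) keys_dbasis by blast
    then obtain v i where vi: "y = contract x v i" "v < length (wv x)" "i < wv x ! v"
      "\<not> samecomp (comps x) (HE v i) (HE v (Suc i mod (wv x ! v)))" unfolding cset_def by blast
    show ?thesis using vi contract_valid[OF xv] by simp
  qed
  then show ?thesis by (auto simp: LD_def)
qed

lemma dd_LDcst: "f \<in> LDcst n1 m1 n2 m2 \<Longrightarrow> dd f \<in> LDcst n1 m1 n2 m2"
proof -
  assume f: "f \<in> LDcst n1 m1 n2 m2"
  have "y \<in> {x \<in> valid_ld n1 m1 n2 m2. \<exists>j\<in>{1..n1}. loops x ! (j - 1) = []}" if y: "y \<in> Poly_Mapping.keys (dd f)" for y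
  proof -
    obtain x where x: "x \<in> Poly_Mapping.keys f" "y \<in> Poly_Mapping.keys (dbasis x)" using y keys_dd by blast
    then have xv: "x \<in> valid_ld n1 m1 n2 m2" and "\<exists>j\<in>{1..n1}. loops x ! (j - 1) = []" using f by (auto simp: LDcst_def)
    then obtain j where j: "j \<in> {1..n1}" "loops x ! (j - 1) = []" by blast
    obtain v i where vi: "y = contract x v i" "v < length (wv x)" "i < wv x ! v"
      "\<not> samecomp (comps x) (HE v i) (HE v (Suc i mod (wv x ! v)))" using x(2) keys_dbasis unfolding cset_def by blast
    have "y \<in> valid_ld n1 m1 n2 m2" using vi contract_valid[OF xv] by simp
    moreover have "j - 1 < length (loops x)" using xv j by (auto simp: valid_ld_def)
    then have "loops y ! (j - 1) = []" using vi(1) j contract_const by blast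
    ultimately show ?thesis using j by blast
  qed
  then show ?thesis by (auto simp: LDcst_def)
qed

lemma keys_pcst: "Poly_Mapping.keys (pcst n1 f) \<subseteq> (\<Union>x\<in>Poly_Mapping.keys f. {pb T x |T. T \<subseteq> {1..n1} \<and> T \<noteq> {}})"
proof -
  have e: "pcst n1 f = frag_extend (\<lambda>x. pcst n1 (frag_of x)) f" by (rule pcst_fe)
  have "Poly_Mapping.keys (pcst n1 f) \<subseteq> (\<Union>x\<in>Poly_Mapping.keys f. Poly_Mapping.keys (pcst n1 (frag_of x)))"
    unfolding e by (rule keys_frag_extend)
  also have "\<dots> \<subseteq> (\<Union>x\<in>Poly_Mapping.keys f. {pb T x |T. T \<subseteq> {1..n1} \<and> T \<noteq> {}})"
    by (rule UN_mono[OF order_refl keys_pcst_of])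
  finally show ?thesis .
qed

lemma pcst_LDcst: "f \<in> LD n1 m1 n2 m2 \<Longrightarrow> pcst n1 f \<in> LDcst n1 m1 n2 m2"
proof -
  assume f: "f \<in> LD n1 m1 n2 m2"
  have "y \<in> {x \<in> valid_ld n1 m1 n2 m2. \<exists>j\<in>{1..n1}. loops x ! (j - 1) = []}" if y: "y \<in> Poly_Mapping.keys (pcst n1 f)" for y
  proof -
    have "y \<in> (\<Union>x\<in>Poly_Mapping.keys f. {pb T x |T. T \<subseteq> {1..n1} \<and> T \<noteq> {}})"
      using y keys_pcst by blast
    then obtain x T where xT: "x \<in> Poly_Mapping.keys f" "y = pb T x" "T \<subseteq> {1..n1}" "T \<noteq> {}"
      by blast
    have xv: "x \<in> valid_ld n1 m1 n2 m2" using xT f by (auto simp: LD_def)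
    obtain j where j: "j \<in> T" using xT by blast
    have "y \<in> valid_ld n1 m1 n2 m2" using xT(2) pb_valid[OF xv] by simp
    moreover have "loops y ! (j - 1) = []" using pb_const[OF xv j xT(3)] xT(2) by simp
    moreover have "j \<in> {1..n1}" using xT(3) j by blast
    ultimately show ?thesis by blast
  qed
  then show ?thesis by (auto simp: LDcst_def)
qed

lemma pcst_add: "pcst n1 (a + b) = pcst n1 a + pcst n1 b"
proof -
  have "pcst n1 (a + b) = frag_extend (\<lambda>x. pcst n1 (frag_of x)) (a + b)" by (rule pcst_fe)
  also have "\<dots> = frag_extend (\<lambda>x. pcst n1 (frag_of x)) a + frag_extend (\<lambda>x. pcst n1 (frag_of x)) b"
    by (rule frag_extend_add)
  also have "\<dots> = pcst n1 a + pcst n1 b" by (simp only: pcst_fe[symmetric])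
  finally show ?thesis .
qed

lemma pcst_zero: "pcst n1 0 = 0"
  using pcst_diff[of n1 0 0] by simp

lemma pcst_id: "f \<in> LDcst n1 m1 n2 m2 \<Longrightarrow> pcst n1 f = f"
proof -
  assume f: "f \<in> LDcst n1 m1 n2 m2"
  have "pcst n1 f = frag_extend (\<lambda>x. pcst n1 (frag_of x)) f" by (rule pcst_fe)
  also have "\<dots> = frag_extend frag_of f"
  proof (rule frag_extend_eq)
    fix x assume "x \<in> Poly_Mapping.keys f"
    then have "\<exists>j\<in>{1..n1}. loops x ! (j - 1) = []" using f unfolding LDcst_def by blast
    then obtain j where "j \<in> {1..n1}" "loops x ! (j - 1) = []" by blast
    then show "pcst n1 (frag_of x) = frag_of x" by (rule pcst_const)
  qed
  also have "\<dots> = f" by (rule frag_expansion[symmetric])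
  finally show ?thesis .
qed

lemma homog_pb: "homog n f \<Longrightarrow> homog n (frag_extend (\<lambda>y. frag_of (pb T y)) f)"
  unfolding homog_def
proof
  fix y assume h: "\<forall>x\<in>Poly_Mapping.keys f. deg x = n" and y: "y \<in> Poly_Mapping.keys (frag_extend (\<lambda>y. frag_of (pb T y)) f)"
  then obtain x where "x \<in> Poly_Mapping.keys f" "y = pb T x" using keys_pb_extend by blast
  then show "deg y = n" using h by simp
qed

lemma homog_pcst: "homog n f \<Longrightarrow> homog n (pcst n1 f)"
  unfolding homog_def
proof
  fix y assume h: "\<forall>x\<in>Poly_Mapping.keys f. deg x = n" and y: "y \<in> Poly_Mapping.keys (pcst n1 f)"
  then have "y \<in> (\<Union>x\<in>Poly_Mapping.keys f. {pb T x |T. T \<subseteq> {1..n1} \<and> T \<noteq> {}})" using keys_pcst by blast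
  then obtain x T where "x \<in> Poly_Mapping.keys f" "y = pb T x" by blast
  then show "deg y = n" using h by simp
qed

lemma frag_extend_diff_fun: "frag_extend (\<lambda>x. a x - b x) c = frag_extend a c - frag_extend b c"
  by (simp add: frag_extend_def frag_cmul_diff2 sum_subtractf)

lemma LDpos_eq: "LDpos n1 m1 n2 m2 = {c - pcst n1 c |c. c \<in> LD n1 m1 n2 m2}"
proof -
  have "frag_extend (\<lambda>x. frag_of x - pcst n1 (frag_of x)) c = c - pcst n1 c" for c
  proof -
    have "frag_extend (\<lambda>x. frag_of x - pcst n1 (frag_of x)) c = frag_extend frag_of c - frag_extend (\<lambda>x. pcst n1 (frag_of x)) c"
      by (rule frag_extend_diff_fun)
    also have "\<dots> = c - pcst n1 c" by (simp only: pcst_fe[symmetric] frag_expansion[symmetric])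
    finally show ?thesis .
  qed
  then show ?thesis by (simp add: LDpos_def LD_def)
qed

lemma LD_diff: "f \<in> LD n1 m1 n2 m2 \<Longrightarrow> g \<in> LD n1 m1 n2 m2 \<Longrightarrow> f - g \<in> LD n1 m1 n2 m2"
  unfolding LD_def using keys_diff[of f g] by auto

lemma LDcst_LD: "LDcst n1 m1 n2 m2 \<subseteq> LD n1 m1 n2 m2"
  unfolding LDcst_def LD_def by auto

lemma LDcst_diff: "f \<in> LDcst n1 m1 n2 m2 \<Longrightarrow> g \<in> LDcst n1 m1 n2 m2 \<Longrightarrow> f - g \<in> LDcst n1 m1 n2 m2"
  unfolding LDcst_def using keys_diff[of f g] by auto

theorem mainTheorem7:
  fixes n1 m1 n2 m2 :: nat
  shows "(\<forall>j\<in>{1..n1}. chain_map (pj j) (LD n1 m1 n2 m2) (LD n1 m1 n2 m2))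
     \<and> subcomplex (LDcst n1 m1 n2 m2) (LD n1 m1 n2 m2)
     \<and> chain_map (pcst n1) (LD n1 m1 n2 m2) (LDcst n1 m1 n2 m2)
     \<and> (\<forall>f\<in>LDcst n1 m1 n2 m2. pcst n1 f = f)
     \<and> subcomplex (LDpos n1 m1 n2 m2) (LD n1 m1 n2 m2)
     \<and> LDcst n1 m1 n2 m2 \<inter> LDpos n1 m1 n2 m2 = {0}
     \<and> (\<forall>f\<in>LD n1 m1 n2 m2. \<exists>a\<in>LDcst n1 m1 n2 m2. \<exists>b\<in>LDpos n1 m1 n2 m2. f = a + b)"
proof (intro conjI)
  show "\<forall>j\<in>{1..n1}. chain_map (pj j) (LD n1 m1 n2 m2) (LD n1 m1 n2 m2)"
  proof
    fix j :: nat assume j: "j \<in> {1..n1}"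
    then have pj: "pj j = frag_extend (\<lambda>x. frag_of (pb {j} x))" using pj_eq by auto
    have A: "pj j f \<in> LD n1 m1 n2 m2" if f: "f \<in> LD n1 m1 n2 m2" for f
    proof -
      have "y \<in> valid_ld n1 m1 n2 m2" if y: "y \<in> Poly_Mapping.keys (pj j f)" for y
      proof -
        obtain x where "x \<in> Poly_Mapping.keys f" "y = pb {j} x" using y keys_pb_extend[of "{j}" f] unfolding pj by blast
        then show ?thesis using f pb_valid unfolding LD_def by blast
      qed
      then show ?thesis unfolding LD_def by blast
    qed
    have B: "pj j (f + g) = pj j f + pj j g" for f g unfolding pj by (rule frag_extend_add)
    have C: "homog n (pj j f)" if "homog n f" for n f unfolding pj using that by (rule homog_pb)
    have D: "pj j (dd f) = dd (pj j f)" for f using j by (simp add: pj_dd)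
    show "chain_map (pj j) (LD n1 m1 n2 m2) (LD n1 m1 n2 m2)"
      unfolding chain_map_def using A B C D by simp
  qed
next
  show "subcomplex (LDcst n1 m1 n2 m2) (LD n1 m1 n2 m2)"
    unfolding subcomplex_def using LDcst_LD LDcst_diff dd_LDcst by (simp add: LDcst_def)
next
  show "chain_map (pcst n1) (LD n1 m1 n2 m2) (LDcst n1 m1 n2 m2)"
    unfolding chain_map_def using pcst_LDcst pcst_add homog_pcst pcst_dd by simp
next
  show "\<forall>f\<in>LDcst n1 m1 n2 m2. pcst n1 f = f" using pcst_id by blast
next
  show "subcomplex (LDpos n1 m1 n2 m2) (LD n1 m1 n2 m2)"
    unfolding subcomplex_def LDpos_eq
  proof (intro conjI ballI)
    show "{c - pcst n1 c |c. c \<in> LD n1 m1 n2 m2} \<subseteq> LD n1 m1 n2 m2"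
      using LD_diff pcst_LDcst LDcst_LD by blast
    show "0 \<in> {c - pcst n1 c |c. c \<in> LD n1 m1 n2 m2}"
      by (rule CollectI, rule exI[of _ 0]) (simp add: pcst_zero LD_def)
  next
    fix f g assume "f \<in> {c - pcst n1 c |c. c \<in> LD n1 m1 n2 m2}" "g \<in> {c - pcst n1 c |c. c \<in> LD n1 m1 n2 m2}"
    then obtain c d where "f = c - pcst n1 c" "g = d - pcst n1 d" "c \<in> LD n1 m1 n2 m2" "d \<in> LD n1 m1 n2 m2" by blast
    then show "f - g \<in> {c - pcst n1 c |c. c \<in> LD n1 m1 n2 m2}"
      by (intro CollectI exI[of _ "c - d"]) (simp add: pcst_diff LD_diff)
  next
    fix f assume "f \<in> {c - pcst n1 c |c. c \<in> LD n1 m1 n2 m2}"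
    then obtain c where "f = c - pcst n1 c" "c \<in> LD n1 m1 n2 m2" by blast
    then show "dd f \<in> {c - pcst n1 c |c. c \<in> LD n1 m1 n2 m2}"
      by (intro CollectI exI[of _ "dd c"]) (simp add: dd_diff pcst_dd dd_LD)
  qed
next
  show "LDcst n1 m1 n2 m2 \<inter> LDpos n1 m1 n2 m2 = {0}"
  proof
    show "LDcst n1 m1 n2 m2 \<inter> LDpos n1 m1 n2 m2 \<subseteq> {0}"
    proof
      fix f assume f: "f \<in> LDcst n1 m1 n2 m2 \<inter> LDpos n1 m1 n2 m2"
      then obtain c where c: "f = c - pcst n1 c" "c \<in> LD n1 m1 n2 m2" unfolding LDpos_eq by blast
      have "pcst n1 f = f" using f pcst_id by blast
      moreover have "pcst n1 f = pcst n1 c - pcst n1 (pcst n1 c)" using c pcst_diff by simp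
      moreover have "pcst n1 (pcst n1 c) = pcst n1 c" using pcst_id pcst_LDcst c(2) by blast
      ultimately show "f \<in> {0}" by simp
    qed
    show "{0} \<subseteq> LDcst n1 m1 n2 m2 \<inter> LDpos n1 m1 n2 m2"
    proof -
      have "0 \<in> LDcst n1 m1 n2 m2" by (simp add: LDcst_def)
      moreover have "0 \<in> LDpos n1 m1 n2 m2" unfolding LDpos_eq
        by (rule CollectI, rule exI[of _ 0]) (simp add: pcst_zero LD_def)
      ultimately show ?thesis by simp
    qed
  qed
next
  show "\<forall>f\<in>LD n1 m1 n2 m2. \<exists>a\<in>LDcst n1 m1 n2 m2. \<exists>b\<in>LDpos n1 m1 n2 m2. f = a + b"
  proof
    fix f assume f: "f \<in> LD n1 m1 n2 m2"
    have "f - pcst n1 f \<in> LDpos n1 m1 n2 m2" unfolding LDpos_eq using f by blast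
    moreover have "pcst n1 f \<in> LDcst n1 m1 n2 m2" using f by (rule pcst_LDcst)
    ultimately show "\<exists>a\<in>LDcst n1 m1 n2 m2. \<exists>b\<in>LDpos n1 m1 n2 m2. f = a + b" by force
  qed
qed

end
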